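(* With the notation $u$, $u_1=\sqrt{1-u^2}$, $u_2=\sqrt{1-\rho_1u^2}$, $P_1=(au,bu_1)$ and the 3-periodic $P_1P_2P_3$ (fixed orientation) as described, let $s_1=|P_2P_3|$, $s_2=|P_3P_1|$, $s_3=|P_1P_2|$. Then there exist polynomials $h_0,h_1,h_2,h_3\in\mathbb{R}[u]$ (coefficients depending only on $a,b$), with $h_1\not\equiv0$, and a sign $\varepsilon\in\{\pm1\}$, such that for all $u\in(-1,1)$: $$h_1(u)\,s_1^2=h_0(u),\qquad h_1(u)\,s_2^2=h_3(u)-\varepsilon\,h_2(u)\,u_1u_2,\qquad h_1(u)\,s_3^2=h_3(u)+\varepsilon\,h_2(u)\,u_1u_2.$$ In particular $s_1,s_2,s_3$ satisfy nonzero polynomial equations $g_1(s_1,u)=0$, $g_2(s_2,u,u_1,u_2)=0$, $g_3(s_3,u,u_1,u_2)=0$.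
   Context: Fix real numbers $a>b>0$, let $E$ be the ellipse $x^2/a^2+y^2/b^2=1$, $c^2=a^2-b^2$, $\delta=\sqrt{a^4-a^2b^2+b^4}$ and $\rho_1=\dfrac{c^2(b^2+\delta)^2}{a^6}$. A 3-periodic is a non-degenerate triangle $P_1P_2P_3$ with all vertices on $E$ such that at each vertex $P_j$ the normal line to $E$ at $P_j$ bisects the interior angle of the triangle at $P_j$. Every point of $E$ is a vertex of exactly one 3-periodic. For $u\in(-1,1)$, $P_1=(au,b\sqrt{1-u^2})$ and $P_2,P_3$ are the other vertices of the 3-periodic through $P_1$, labelled in one fixed orientation for all $u$. *)

theory Defs
  imports "HOL-Computational_Algebra.Polynomial"
begin

type_synonym pt = "real \<times> real"

definition on_ellipse :: "real \<Rightarrow> real \<Rightarrow> pt \<Rightarrow> bool" where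
  "on_ellipse a b P \<longleftrightarrow> (fst P)^2 / a^2 + (snd P)^2 / b^2 = 1"

definition seglen :: "pt \<Rightarrow> pt \<Rightarrow> real" where
  "seglen P Q = sqrt ((fst Q - fst P)^2 + (snd Q - snd P)^2)"

definition signed_area2 :: "pt \<Rightarrow> pt \<Rightarrow> pt \<Rightarrow> real" where
  "signed_area2 P Q R = (fst Q - fst P) * (snd R - snd P) - (snd Q - snd P) * (fst R - fst P)"

text \<open>The normal line to E at P (direction (x/a^2, y/b^2)) bisects the interior angle
  of triangle PQR at P: the normal is parallel to the sum of the unit vectors from P
  towards Q and towards R (the interior bisector direction).\<close>
definition normal_bisects :: "real \<Rightarrow> real \<Rightarrow> pt \<Rightarrow> pt \<Rightarrow> pt \<Rightarrow> bool" where
  "normal_bisects a b P Q R \<longleftrightarrow>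
     (let nx = fst P / a^2; ny = snd P / b^2;
          dx = (fst Q - fst P) / seglen P Q + (fst R - fst P) / seglen P R;
          dy = (snd Q - snd P) / seglen P Q + (snd R - snd P) / seglen P R
      in nx * dy - ny * dx = 0)"

definition three_periodic :: "real \<Rightarrow> real \<Rightarrow> pt \<Rightarrow> pt \<Rightarrow> pt \<Rightarrow> bool" where
  "three_periodic a b P1 P2 P3 \<longleftrightarrow>
     signed_area2 P1 P2 P3 \<noteq> 0 \<and>
     on_ellipse a b P1 \<and> on_ellipse a b P2 \<and> on_ellipse a b P3 \<and>
     normal_bisects a b P1 P2 P3 \<and> normal_bisects a b P2 P3 P1 \<and>
     normal_bisects a b P3 P1 P2"

definition ell_delta :: "real \<Rightarrow> real \<Rightarrow> real" where
  "ell_delta a b = sqrt (a^4 - a^2 * b^2 + b^4)"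

definition rho1 :: "real \<Rightarrow> real \<Rightarrow> real" where
  "rho1 a b = (a^2 - b^2) * (b^2 + ell_delta a b)^2 / a^6"

end

theory Submission
  imports Defs
begin

lemma seglen_sym: "seglen P Q = seglen Q P"
  unfolding seglen_def by (simp add: power2_commute)

lemma seglen_sq: "(seglen P Q)^2 = (fst Q - fst P)^2 + (snd Q - snd P)^2"
  unfolding seglen_def by simp

lemma seglen_pos: "P \<noteq> Q \<Longrightarrow> seglen P Q > 0"
  unfolding seglen_def
  by (cases P; cases Q) (auto simp: sum_power2_gt_zero_iff)

lemma bisect:
  fixes a b :: real and P Q R :: pt
  assumes ab: "a > 0" "b > 0" and nb: "normal_bisects a b P Q R"
    and ar: "signed_area2 P Q R \<noteq> 0" and eP: "on_ellipse a b P"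
  shows "(1 - fst P*fst Q/a^2 - snd P*snd Q/b^2)/seglen P Q
       = (1 - fst P*fst R/a^2 - snd P*snd R/b^2)/seglen P R"
proof -
  obtain px py where P: "P = (px,py)" by fastforce
  obtain qx qy where Q: "Q = (qx,qy)" by fastforce
  obtain rx ry where R: "R = (rx,ry)" by fastforce
  have PQ: "P \<noteq> Q" using ar unfolding signed_area2_def by auto
  have PR: "P \<noteq> R" using ar unfolding signed_area2_def by auto
  define LQ where "LQ = seglen P Q"
  define LR where "LR = seglen P R"
  have LQp: "LQ > 0" using seglen_pos[OF PQ] LQ_def by simp
  have LRp: "LR > 0" using seglen_pos[OF PR] LR_def by simp
  have LQ2: "LQ^2 = (qx-px)^2 + (qy-py)^2" using seglen_sq[of P Q] P Q LQ_def by simp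
  have LR2: "LR^2 = (rx-px)^2 + (ry-py)^2" using seglen_sq[of P R] P R LR_def by simp
  define vqx where "vqx = (qx-px)/LQ"
  define vqy where "vqy = (qy-py)/LQ"
  define vrx where "vrx = (rx-px)/LR"
  define vry where "vry = (ry-py)/LR"
  have "vqx^2 + vqy^2 = LQ^2/LQ^2" unfolding vqx_def vqy_def
    by (simp only: power_divide add_divide_distrib[symmetric] LQ2)
  hence uq: "vqx^2 + vqy^2 = 1" using LQp by simp
  have "vrx^2 + vry^2 = LR^2/LR^2" unfolding vrx_def vry_def
    by (simp only: power_divide add_divide_distrib[symmetric] LR2)
  hence ur: "vrx^2 + vry^2 = 1" using LRp by simp
  define nx where "nx = px/a^2"
  define ny where "ny = py/b^2"
  have h: "nx*(vqy+vry) - ny*(vqx+vrx) = 0"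
    using nb unfolding normal_bisects_def Let_def P Q R nx_def ny_def vqx_def vqy_def vrx_def vry_def LQ_def LR_def
    by simp
  have st: "(vqx+vrx)*(vqx-vrx) + (vqy+vry)*(vqy-vry) = 0"
    using uq ur by (simp add: algebra_simps power2_eq_square)
  have sne: "vqx+vrx \<noteq> 0 \<or> vqy+vry \<noteq> 0"
  proof (rule ccontr)
    assume "\<not> ?thesis"
    hence "vrx = -vqx" "vry = -vqy" by auto
    hence "rx - px = -LR*vqx" "ry - py = -LR*vqy" using LRp unfolding vrx_def vry_def
      by (auto simp: field_simps)
    moreover have "qx - px = LQ*vqx" "qy - py = LQ*vqy" using LQp unfolding vqx_def vqy_def
      by auto
    ultimately have "signed_area2 P Q R = 0" unfolding signed_area2_def P Q R by simp
    thus False using ar by simp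
  qed
  have e1: "(vqy+vry) * (nx*(vqx-vrx) + ny*(vqy-vry)) = 0"
  proof -
    have "(vqy+vry) * (nx*(vqx-vrx) + ny*(vqy-vry)) = nx*(vqy+vry)*(vqx-vrx) + ny*(vqy+vry)*(vqy-vry)"
      by (simp add: algebra_simps)
    also have "\<dots> = ny*(vqx+vrx)*(vqx-vrx) + ny*(vqy+vry)*(vqy-vry)"
      using h by (simp add: algebra_simps)
    also have "\<dots> = 0" using st by (simp add: algebra_simps) (metis distrib_left mult_zero_right st)
    finally show ?thesis .
  qed
  have e2: "(vqx+vrx) * (nx*(vqx-vrx) + ny*(vqy-vry)) = 0"
  proof -
    have "(vqx+vrx) * (nx*(vqx-vrx) + ny*(vqy-vry)) = nx*(vqx+vrx)*(vqx-vrx) + ny*(vqx+vrx)*(vqy-vry)"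
      by (simp add: algebra_simps)
    also have "\<dots> = nx*(vqx+vrx)*(vqx-vrx) + nx*(vqy+vry)*(vqy-vry)"
      using h by (simp add: algebra_simps)
    also have "\<dots> = 0" using st by (metis distrib_left mult.assoc mult_zero_right)
    finally show ?thesis .
  qed
  have nt: "nx*(vqx-vrx) + ny*(vqy-vry) = 0" using e1 e2 sne by auto
  have eP': "px^2/a^2 + py^2/b^2 = 1" using eP unfolding on_ellipse_def P by simp
  have numq: "px*(qx-px)/a^2 + py*(qy-py)/b^2 = -(1 - px*qx/a^2 - py*qy/b^2)"
  proof -
    have "px*(qx-px)/a^2 + py*(qy-py)/b^2 = px*qx/a^2 + py*qy/b^2 - (px^2/a^2+py^2/b^2)"
      by (simp add: algebra_simps power2_eq_square diff_divide_distrib)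
    thus ?thesis using eP' by simp
  qed
  have "nx*vqx + ny*vqy = (px*(qx-px)/a^2 + py*(qy-py)/b^2)/LQ"
    unfolding nx_def ny_def vqx_def vqy_def by (simp add: add_divide_distrib)
  hence mq: "nx*vqx + ny*vqy = -(1 - px*qx/a^2 - py*qy/b^2)/LQ"
    using numq by simp
  have numr: "px*(rx-px)/a^2 + py*(ry-py)/b^2 = -(1 - px*rx/a^2 - py*ry/b^2)"
  proof -
    have "px*(rx-px)/a^2 + py*(ry-py)/b^2 = px*rx/a^2 + py*ry/b^2 - (px^2/a^2+py^2/b^2)"
      by (simp add: algebra_simps power2_eq_square diff_divide_distrib)
    thus ?thesis using eP' by simp
  qed
  have "nx*vrx + ny*vry = (px*(rx-px)/a^2 + py*(ry-py)/b^2)/LR"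
    unfolding nx_def ny_def vrx_def vry_def by (simp add: add_divide_distrib)
  hence mr: "nx*vrx + ny*vry = -(1 - px*rx/a^2 - py*ry/b^2)/LR"
    using numr by simp
  have "nx*vqx + ny*vqy = nx*vrx + ny*vry" using nt by (simp add: algebra_simps)
  hence "-(1 - px*qx/a^2 - py*qy/b^2)/LQ = -(1 - px*rx/a^2 - py*ry/b^2)/LR"
    using mq mr by metis
  hence "(1 - px*qx/a^2 - py*qy/b^2)/LQ = (1 - px*rx/a^2 - py*ry/b^2)/LR"
    by (metis minus_divide_left neg_equal_iff_equal)
  thus ?thesis unfolding LQ_def LR_def P Q R by simp
qed

lemma cpair:
  fixes X Y X' Y' e r :: real
  assumes "X^2 + Y^2 = 1" "X'^2 + Y'^2 = 1"
  shows "(Complex X Y)^2 + (Complex X' Y')^2 + of_real e * ((Complex X Y)^2 * (Complex X' Y')^2 + 1)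
         - 2 * of_real r * Complex X Y * Complex X' Y'
       = 2 * Complex X Y * Complex X' Y' * of_real ((1+e)*X*X' + (1-e)*Y*Y' - r)"
  using assms
  apply (simp add: complex_eq_iff power2_eq_square)
  apply (intro conjI)
  apply algebra
  apply algebra
  done

lemma cayley:
  fixes X1 Y1 X2 Y2 X3 Y3 e r :: real
  assumes u1: "X1^2 + Y1^2 = 1" and u2: "X2^2 + Y2^2 = 1" and u3: "X3^2 + Y3^2 = 1"
    and e12: "(1+e)*X1*X2 + (1-e)*Y1*Y2 = r"
    and e13: "(1+e)*X1*X3 + (1-e)*Y1*Y3 = r"
    and e23: "(1+e)*X2*X3 + (1-e)*Y2*Y3 = r"
    and d23: "(X2,Y2) \<noteq> (X3,Y3)"
    and ns: "e*(X1^2 - Y1^2) \<noteq> r - 1"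
  shows "e^2 = 1 + 2*r"
proof -
  define z1 where "z1 = Complex X1 Y1"
  define z2 where "z2 = Complex X2 Y2"
  define z3 where "z3 = Complex X3 Y3"
  define E where "E = complex_of_real e"
  define R where "R = complex_of_real r"
  define w where "w = z1^2"
  define N where "N = 1 + E*w"
  have p12: "z1^2 + z2^2 + E*(z1^2*z2^2+1) - 2*R*z1*z2 = 0"
    using cpair[OF u1 u2, of e r] e12 unfolding z1_def z2_def E_def R_def by simp
  have p13: "z1^2 + z3^2 + E*(z1^2*z3^2+1) - 2*R*z1*z3 = 0"
    using cpair[OF u1 u3, of e r] e13 unfolding z1_def z3_def E_def R_def by simp
  have p23: "z2^2 + z3^2 + E*(z2^2*z3^2+1) - 2*R*z2*z3 = 0"
    using cpair[OF u2 u3, of e r] e23 unfolding z2_def z3_def E_def R_def by simp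
  have z23: "z2 \<noteq> z3" using d23 unfolding z2_def z3_def by simp
  have "(z2 - z3) * (N*(z2+z3) - 2*R*z1) = 0"
  proof -
    have "(z2 - z3) * (N*(z2+z3) - 2*R*z1) =
       (z1^2 + z2^2 + E*(z1^2*z2^2+1) - 2*R*z1*z2) - (z1^2 + z3^2 + E*(z1^2*z3^2+1) - 2*R*z1*z3)"
      unfolding N_def w_def by algebra
    thus ?thesis using p12 p13 by simp
  qed
  hence S: "N*(z2+z3) = 2*R*z1" using z23 by simp
  have P: "N*(z2*z3) = w + E"
  proof -
    have "z1^2 + z2^2 + E*(z1^2*z2^2+1) - 2*R*z1*z2 = N*z2^2 - (N*(z2+z3))*z2 + w + E"
      unfolding N_def w_def using S[symmetric] unfolding N_def w_def by (simp add: algebra_simps power2_eq_square)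
    hence "N*z2^2 - (N*(z2+z3))*z2 + w + E = 0" using p12 by simp
    thus ?thesis by (simp add: algebra_simps power2_eq_square)
  qed
  have "N^2 * (z2^2 + z3^2 + E*(z2^2*z3^2+1) - 2*R*z2*z3)
      = (N*(z2+z3))^2 - 2*N*(N*(z2*z3)) + E*((N*(z2*z3))^2 + N^2) - 2*R*N*(N*(z2*z3))"
    by algebra
  also have "\<dots> = (2*R*z1)^2 - 2*N*(w+E) + E*((w+E)^2 + N^2) - 2*R*N*(w+E)"
    unfolding S P ..
  also have "\<dots> = (E^2 - 1 - 2*R) * (E*w^2 - 2*(R-1)*w + E)"
    unfolding N_def w_def by algebra
  finally have F: "(E^2 - 1 - 2*R) * (E*w^2 - 2*(R-1)*w + E) = 0" using p23 by simp
  have "E*w^2 - 2*(R-1)*w + E \<noteq> 0"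
  proof
    assume h: "E*w^2 - 2*(R-1)*w + E = 0"
    have wc: "w * cnj w = 1" unfolding w_def z1_def using u1
      by (simp add: complex_eq_iff power2_eq_square) algebra
    have "(E*w^2 - 2*(R-1)*w + E) * cnj w = E*w*(w*cnj w) - 2*(R-1)*(w*cnj w) + E*cnj w"
      by (simp add: algebra_simps power2_eq_square)
    hence "E*w - 2*(R-1) + E*cnj w = 0" using h wc by simp
    hence "Re (E*w - 2*(R-1) + E*cnj w) = 0" by simp
    hence "2*e*(X1^2 - Y1^2) = 2*(r-1)"
      unfolding E_def R_def w_def z1_def by (simp add: power2_eq_square algebra_simps)
    thus False using ns by simp
  qed
  hence "E^2 - 1 - 2*R = 0" using F by simp
  hence "complex_of_real (e^2 - 1 - 2*r) = 0" unfolding E_def R_def by simp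
  hence "e^2 - 1 - 2*r = 0" by (simp only: of_real_eq_0_iff)
  thus ?thesis by simp
qed

lemma mdouble:
  fixes a b x y x' y' :: real
  assumes "a > 0" "b > 0" "x^2/a^2 + y^2/b^2 = 1" "x'^2/a^2 + y'^2/b^2 = 1"
  shows "2*(1 - x*x'/a^2 - y*y'/b^2) = (x'-x)^2/a^2 + (y'-y)^2/b^2"
proof -
  have "(x'-x)^2/a^2 + (y'-y)^2/b^2 = (x^2/a^2 + y^2/b^2) + (x'^2/a^2 + y'^2/b^2) - 2*(x*x'/a^2 + y*y'/b^2)"
    by (simp add: power2_eq_square algebra_simps add_divide_distrib diff_divide_distrib)
  thus ?thesis using assms by simp
qed

lemma pairk:
  fixes a b k L x y x' y' :: real
  assumes ab: "a > 0" "b > 0" and e: "x^2/a^2 + y^2/b^2 = 1" and e': "x'^2/a^2 + y'^2/b^2 = 1"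
    and L: "L^2 = (x'-x)^2 + (y'-y)^2" and mk: "1 - x*x'/a^2 - y*y'/b^2 = k*L"
    and mne: "1 - x*x'/a^2 - y*y'/b^2 \<noteq> 0"
  shows "(1 + k^2*(b^2-a^2))*(x/a)*(x'/a) + (1 - k^2*(b^2-a^2))*(y/b)*(y'/b) = 1 - k^2*(a^2+b^2)"
proof -
  define X where "X = x/a"
  define Y where "Y = y/b"
  define X' where "X' = x'/a"
  define Y' where "Y' = y'/b"
  have u: "X^2 + Y^2 = 1" using e unfolding X_def Y_def by (simp add: power_divide)
  have u': "X'^2 + Y'^2 = 1" using e' unfolding X'_def Y'_def by (simp add: power_divide)
  define m where "m = 1 - X*X' - Y*Y'"
  have m: "m = 1 - x*x'/a^2 - y*y'/b^2" unfolding m_def X_def Y_def X'_def Y'_def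
    by (simp add: power2_eq_square)
  have xx: "x = a*X" "x' = a*X'" "y = b*Y" "y' = b*Y'" unfolding X_def Y_def X'_def Y'_def using ab by auto
  have L2: "L^2 = a^2*(X'-X)^2 + b^2*(Y'-Y)^2" unfolding L xx by (simp add: power2_eq_square algebra_simps)
  have i1: "(X'-X)^2 = m*(1 - X*X' + Y*Y')" unfolding m_def using u u' by algebra
  have i2: "(Y'-Y)^2 = m*(1 + X*X' - Y*Y')" unfolding m_def using u u' by algebra
  have "m^2 = k^2*L^2" using mk m by (simp add: power_mult_distrib)
  also have "\<dots> = m * (k^2*(a^2*(1 - X*X' + Y*Y') + b^2*(1 + X*X' - Y*Y')))"
    unfolding L2 i1 i2 by (simp add: algebra_simps)
  finally have "m * m = m * (k^2*(a^2*(1 - X*X' + Y*Y') + b^2*(1 + X*X' - Y*Y')))"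
    by (simp add: power2_eq_square)
  hence "m = k^2*(a^2*(1 - X*X' + Y*Y') + b^2*(1 + X*X' - Y*Y'))" using mne m by simp
  thus ?thesis unfolding m_def X_def[symmetric] Y_def[symmetric] X'_def[symmetric] Y'_def[symmetric]
    by (simp add: algebra_simps)
qed

definition mm :: "real \<Rightarrow> real \<Rightarrow> pt \<Rightarrow> pt \<Rightarrow> real" where
  "mm a b P Q = 1 - fst P*fst Q/a^2 - snd P*snd Q/b^2"

definition tz :: "real \<Rightarrow> real \<Rightarrow> real" where
  "tz a b = (2*ell_delta a b - a^2 - b^2)/(a^2-b^2)^2"

lemma area_cyc: "signed_area2 P2 P3 P1 = signed_area2 P1 P2 P3"
  unfolding signed_area2_def by (simp add: algebra_simps)

lemma area_distinct: "signed_area2 P Q R \<noteq> 0 \<Longrightarrow> P \<noteq> Q \<and> P \<noteq> R \<and> Q \<noteq> R"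
  unfolding signed_area2_def by (auto simp: algebra_simps)

lemma mm_sym: "mm a b P Q = mm a b Q P"
  unfolding mm_def by (simp add: algebra_simps)

lemma mm_pos:
  assumes "a > 0" "b > 0" "on_ellipse a b P" "on_ellipse a b Q" "P \<noteq> Q"
  shows "mm a b P Q > 0"
proof -
  obtain x y x' y' where P: "P = (x,y)" and Q: "Q = (x',y')" by fastforce
  have "2*mm a b P Q = (x'-x)^2/a^2 + (y'-y)^2/b^2"
    using mdouble[of a b x y x' y'] assms unfolding mm_def on_ellipse_def P Q by simp
  moreover have "(x'-x)^2/a^2 + (y'-y)^2/b^2 > 0"
  proof -
    have "x' \<noteq> x \<or> y' \<noteq> y" using assms(5) P Q by auto
    thus ?thesis using assms(1,2)
      by (auto intro: add_pos_nonneg add_nonneg_pos)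
  qed
  ultimately show ?thesis by simp
qed

lemma kcommon:
  assumes ab: "a > 0" "b > 0" and tp: "three_periodic a b P1 P2 P3"
  shows "\<exists>k>0. mm a b P1 P2 = k*seglen P1 P2 \<and> mm a b P1 P3 = k*seglen P1 P3
               \<and> mm a b P2 P3 = k*seglen P2 P3"
proof -
  have ar: "signed_area2 P1 P2 P3 \<noteq> 0" and e1: "on_ellipse a b P1" and e2: "on_ellipse a b P2"
    and e3: "on_ellipse a b P3" and b1: "normal_bisects a b P1 P2 P3"
    and b2: "normal_bisects a b P2 P3 P1"
    using tp unfolding three_periodic_def by auto
  have ar2: "signed_area2 P2 P3 P1 \<noteq> 0" using ar area_cyc by metis
  have d: "P1 \<noteq> P2" "P1 \<noteq> P3" "P2 \<noteq> P3" using area_distinct[OF ar] by auto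
  have q1: "mm a b P1 P2 / seglen P1 P2 = mm a b P1 P3 / seglen P1 P3"
    using bisect[OF ab b1 ar e1] unfolding mm_def .
  have q2: "mm a b P2 P3 / seglen P2 P3 = mm a b P2 P1 / seglen P2 P1"
    using bisect[OF ab b2 ar2 e2] unfolding mm_def .
  define k where "k = mm a b P1 P2 / seglen P1 P2"
  have L: "seglen P1 P2 > 0" "seglen P1 P3 > 0" "seglen P2 P3 > 0"
    using seglen_pos d by auto
  have "mm a b P1 P2 > 0" using mm_pos[OF ab e1 e2 d(1)] .
  hence kp: "k > 0" using L unfolding k_def by simp
  have "mm a b P1 P2 = k*seglen P1 P2" using L unfolding k_def by simp
  moreover have "mm a b P1 P3 = k*seglen P1 P3" using L q1 unfolding k_def by (simp add: field_simps)
  moreover have "mm a b P2 P3 = k*seglen P2 P3" using L q2 unfolding k_def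
    by (simp add: field_simps mm_sym[of a b P2 P1] seglen_sym[of P2 P1])
  ultimately show ?thesis using kp by blast
qed

lemma delta_arg: "a^4 - a^2*b^2 + b^4 \<ge> (0::real)"
proof -
  have "a^4 - a^2*b^2 + b^4 = (a^2-b^2)^2 + (a*b)^2" by algebra
  thus ?thesis using zero_le_power2[of "a^2-b^2"] zero_le_power2[of "a*b"] by linarith
qed

lemma delta_sq: "(ell_delta a b)^2 = a^4 - a^2*b^2 + b^4"
  unfolding ell_delta_def using delta_arg by simp

lemma delta_nonneg: "ell_delta a b \<ge> 0"
  unfolding ell_delta_def using delta_arg by simp

lemma tval:
  assumes ab: "a > b" "b > 0" and tp: "three_periodic a b P1 P2 P3" and kp: "k > 0"
    and k12: "mm a b P1 P2 = k*seglen P1 P2" and k13: "mm a b P1 P3 = k*seglen P1 P3"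
    and k23: "mm a b P2 P3 = k*seglen P2 P3"
  shows "k^2 = tz a b"
proof -
  have a0: "a > 0" using ab by simp
  have ar: "signed_area2 P1 P2 P3 \<noteq> 0" and e1: "on_ellipse a b P1" and e2: "on_ellipse a b P2"
    and e3: "on_ellipse a b P3"
    using tp unfolding three_periodic_def by auto
  have d: "P1 \<noteq> P2" "P1 \<noteq> P3" "P2 \<noteq> P3" using area_distinct[OF ar] by auto
  obtain x1 y1 where P1: "P1 = (x1,y1)" by fastforce
  obtain x2 y2 where P2: "P2 = (x2,y2)" by fastforce
  obtain x3 y3 where P3: "P3 = (x3,y3)" by fastforce
  have el: "x1^2/a^2 + y1^2/b^2 = 1" "x2^2/a^2 + y2^2/b^2 = 1" "x3^2/a^2 + y3^2/b^2 = 1"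
    using e1 e2 e3 unfolding on_ellipse_def P1 P2 P3 by auto
  have mp: "mm a b P1 P2 > 0" "mm a b P1 P3 > 0" "mm a b P2 P3 > 0"
    using mm_pos[OF a0 ab(2)] e1 e2 e3 d by auto
  have pk12: "(1 + k^2*(b^2-a^2))*(x1/a)*(x2/a) + (1 - k^2*(b^2-a^2))*(y1/b)*(y2/b) = 1 - k^2*(a^2+b^2)"
    apply (rule pairk[OF a0 ab(2) el(1) el(2), of "seglen P1 P2" k])
    using seglen_sq[of P1 P2] k12 mp unfolding P1 P2 mm_def by auto
  have pk13: "(1 + k^2*(b^2-a^2))*(x1/a)*(x3/a) + (1 - k^2*(b^2-a^2))*(y1/b)*(y3/b) = 1 - k^2*(a^2+b^2)"
    apply (rule pairk[OF a0 ab(2) el(1) el(3), of "seglen P1 P3" k])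
    using seglen_sq[of P1 P3] k13 mp unfolding P1 P3 mm_def by auto
  have pk23: "(1 + k^2*(b^2-a^2))*(x2/a)*(x3/a) + (1 - k^2*(b^2-a^2))*(y2/b)*(y3/b) = 1 - k^2*(a^2+b^2)"
    apply (rule pairk[OF a0 ab(2) el(2) el(3), of "seglen P2 P3" k])
    using seglen_sq[of P2 P3] k23 mp unfolding P2 P3 mm_def by auto
  have un: "(x1/a)^2 + (y1/b)^2 = 1" "(x2/a)^2 + (y2/b)^2 = 1" "(x3/a)^2 + (y3/b)^2 = 1"
    using el by (auto simp: power_divide)
  have d23: "(x2/a, y2/b) \<noteq> (x3/a, y3/b)" using d(3) a0 ab(2) unfolding P2 P3 by auto
  have ns: "k^2*(b^2-a^2)*((x1/a)^2 - (y1/b)^2) \<noteq> (1 - k^2*(a^2+b^2)) - 1"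
  proof
    assume h: "k^2*(b^2-a^2)*((x1/a)^2 - (y1/b)^2) = (1 - k^2*(a^2+b^2)) - 1"
    have k2: "k^2 > 0" using kp by simp
    have "k^2*((a^2-b^2)*((x1/a)^2 - (y1/b)^2)) = k^2*(a^2+b^2)" using h by (simp add: algebra_simps)
    hence h2: "(a^2-b^2)*((x1/a)^2 - (y1/b)^2) = a^2+b^2" using k2 by simp
    have "(x1/a)^2 - (y1/b)^2 \<le> 1" using un(1) by (smt (verit) zero_le_power2)
    moreover have "a^2 - b^2 > 0" using ab by (simp add: power_strict_mono)
    ultimately have "(a^2-b^2)*((x1/a)^2 - (y1/b)^2) \<le> a^2 - b^2"
      by (simp add: mult_left_le)
    moreover have "b^2 > 0" using ab by simp
    ultimately show False using h2 by simp
  qed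
  have "(k^2*(b^2-a^2))^2 = 1 + 2*(1 - k^2*(a^2+b^2))"
    by (rule cayley[OF un pk12 pk13 pk23 d23 ns])
  hence q: "(a^2-b^2)^2*(k^2)^2 + 2*(a^2+b^2)*k^2 - 3 = 0"
    by (simp add: power2_eq_square algebra_simps)
  define c4 where "c4 = (a^2-b^2)^2"
  have c4p: "c4 > 0" unfolding c4_def using ab by (simp add: power_strict_mono)
  have "(c4*k^2 + (a^2+b^2))^2 = (2*ell_delta a b)^2"
    using q delta_sq[of a b] unfolding c4_def by algebra
  moreover have "c4*k^2 + (a^2+b^2) \<ge> 0" using c4p by (simp add: add_nonneg_nonneg)
  moreover have "2*ell_delta a b \<ge> 0" using delta_nonneg by simp
  ultimately have "c4*k^2 + (a^2+b^2) = 2*ell_delta a b"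
    using power2_eq_iff_nonneg by blast
  thus ?thesis unfolding tz_def c4_def[symmetric] using c4p by (simp add: field_simps)
qed

lemma partB:
  fixes a b u u1 x y k L :: real
  assumes ab: "a > 0" "b > 0" and uu: "u^2 + u1^2 = 1" and e: "x^2/a^2 + y^2/b^2 = 1"
    and Lp: "L > 0" and L2: "L^2 = (x - a*u)^2 + (y - b*u1)^2"
    and mk: "1 - (a*u)*x/a^2 - (b*u1)*y/b^2 = k*L"
  shows "(u/a)*(x-a*u) + (u1/b)*(y-b*u1) = -k*L"
    and "((-(u1/b)*(x-a*u) + (u/a)*(y-b*u1))/L)^2 = (u^2/a^2 + u1^2/b^2) - k^2"
    and "2*k*(u^2/a^2 + u1^2/b^2)^2 = L * (k^2*(u^2/a^4 + u1^2/b^4)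
            + ((u^2/a^2 + u1^2/b^2) - k^2)/(a^2*b^2)
            - 2*k*u*u1*(a^2-b^2)/(a^3*b^3) * ((-(u1/b)*(x-a*u) + (u/a)*(y-b*u1))/L))"
proof -
  define nx where "nx = u/a"
  define ny where "ny = u1/b"
  define dx where "dx = x - a*u"
  define dy where "dy = y - b*u1"
  define nd where "nd = nx*dx + ny*dy"
  define w where "w = -ny*dx + nx*dy"
  define N2 where "N2 = nx^2 + ny^2"
  define om where "om = w/L"
  have anx: "a*nx = u" "b*ny = u1" unfolding nx_def ny_def using ab by auto
  have e1: "(a*u)^2/a^2 + (b*u1)^2/b^2 = 1" using uu ab by (simp add: power_mult_distrib)
  have ndv: "nd = -k*L"
  proof -
    have "nd = u*x/a + u1*y/b - (u^2 + u1^2)"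
      unfolding nd_def nx_def ny_def dx_def dy_def using ab
      by (simp add: field_simps power2_eq_square)
    moreover have "1 - (a*u)*x/a^2 - (b*u1)*y/b^2 = 1 - u*x/a - u1*y/b" using ab
      by (simp add: power2_eq_square)
    ultimately show ?thesis using mk uu by simp
  qed
  thus "(u/a)*(x-a*u) + (u1/b)*(y-b*u1) = -k*L" unfolding nd_def nx_def ny_def dx_def dy_def .
  have lag: "N2 * (dx^2 + dy^2) = nd^2 + w^2" unfolding N2_def nd_def w_def by algebra
  hence "N2 * L^2 = k^2*L^2 + w^2" using L2 ndv unfolding dx_def dy_def by (simp add: power_mult_distrib)
  hence w2: "w^2 = L^2*(N2 - k^2)" by (simp add: algebra_simps)
  have om2: "om^2 = N2 - k^2" unfolding om_def using w2 Lp by (simp add: power_divide)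
  thus "((-(u1/b)*(x-a*u) + (u/a)*(y-b*u1))/L)^2 = (u^2/a^2 + u1^2/b^2) - k^2"
    unfolding om_def w_def N2_def nx_def ny_def dx_def dy_def by (simp add: power_divide)
  have wL: "w = om*L" unfolding om_def using Lp by simp
  have q: "dx^2/a^2 + dy^2/b^2 = 2*k*L"
    using mdouble[OF ab e1 e] mk unfolding dx_def dy_def by simp
  have i1: "N2*dx = nd*nx - w*ny" unfolding N2_def nd_def w_def by algebra
  have i2: "N2*dy = nd*ny + w*nx" unfolding N2_def nd_def w_def by algebra
  have "N2^2*(2*k*L) = (N2*dx)^2/a^2 + (N2*dy)^2/b^2"
    unfolding q[symmetric] by (simp add: power_mult_distrib algebra_simps add_divide_distrib)
  also have "\<dots> = L^2*((k*nx + om*ny)^2/a^2 + (k*ny - om*nx)^2/b^2)"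
    unfolding i1 i2 ndv wL by (simp add: power2_eq_square algebra_simps add_divide_distrib)
  also have "(k*nx + om*ny)^2/a^2 + (k*ny - om*nx)^2/b^2
      = k^2*(u^2/a^4 + u1^2/b^4) + om^2*(u^2+u1^2)/(a^2*b^2) - 2*k*u*u1*(a^2-b^2)/(a^3*b^3)*om"
    unfolding nx_def ny_def using ab by (simp add: field_simps) algebra
  finally have "N2^2*(2*k*L) = L^2*(k^2*(u^2/a^4 + u1^2/b^4) + (N2 - k^2)/(a^2*b^2) - 2*k*u*u1*(a^2-b^2)/(a^3*b^3)*om)"
    unfolding om2 uu by simp
  hence "L*(2*k*N2^2) = L*(L*(k^2*(u^2/a^4 + u1^2/b^4) + (N2 - k^2)/(a^2*b^2) - 2*k*u*u1*(a^2-b^2)/(a^3*b^3)*om))"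
    by (simp add: power2_eq_square algebra_simps)
  hence "2*k*N2^2 = L*(k^2*(u^2/a^4 + u1^2/b^4) + (N2 - k^2)/(a^2*b^2) - 2*k*u*u1*(a^2-b^2)/(a^3*b^3)*om)"
    using Lp by simp
  thus "2*k*(u^2/a^2 + u1^2/b^2)^2 = L * (k^2*(u^2/a^4 + u1^2/b^4)
            + ((u^2/a^2 + u1^2/b^2) - k^2)/(a^2*b^2)
            - 2*k*u*u1*(a^2-b^2)/(a^3*b^3) * ((-(u1/b)*(x-a*u) + (u/a)*(y-b*u1))/L))"
    unfolding om_def w_def N2_def nx_def ny_def dx_def dy_def by (simp add: power_divide)
qed

lemma tz_facts:
  assumes ab: "a > b" "b > (0::real)"
  shows "tz a b > 0" "1/b^2 - tz a b > 0"
    "(1/b^2 - tz a b) * rho1 a b = (a^2-b^2)/(a^2*b^2)"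
proof -
  define d where "d = ell_delta a b"
  define c2 where "c2 = a^2 - b^2"
  have d2: "d^2 = a^4 - a^2*b^2 + b^4" unfolding d_def by (rule delta_sq)
  have d0: "d \<ge> 0" unfolding d_def by (rule delta_nonneg)
  have c2p: "c2 > 0" unfolding c2_def using ab by (simp add: power_strict_mono)
  have b2: "b^2 > 0" using ab by simp
  have a2: "a^2 > 0" using ab by simp
  have t: "tz a b = (2*d - a^2 - b^2)/c2^2" unfolding tz_def d_def c2_def ..
  have "(2*d)^2 - (a^2+b^2)^2 = 3*c2^2" using d2 unfolding c2_def by algebra
  moreover have "c2^2 > 0" using c2p by simp
  ultimately have "(2*d)^2 > (a^2+b^2)^2" by linarith
  hence "2*d > a^2+b^2" using d0 by (smt (verit) power_mono)
  thus "tz a b > 0" unfolding t using c2p by simp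
  have "d^2 - (b^2)^2 = a^2*c2" using d2 unfolding c2_def by algebra
  moreover have "a^2*c2 > 0" using a2 c2p by simp
  ultimately have "d^2 > (b^2)^2" by linarith
  hence db: "d > b^2" using d0 by (smt (verit) power_mono)
  have e1: "c2^2 * (1 - b^2*tz a b) = (d - b^2)^2"
    unfolding t using c2p d2 unfolding c2_def by (simp add: field_simps) algebra
  have "(d-b^2)^2 > 0" using db by simp
  hence "1 - b^2*tz a b > 0" using e1 c2p by (smt (verit) mult_nonneg_nonpos zero_less_power)
  hence "b^2*(1/b^2 - tz a b) > 0" using b2 by (simp add: algebra_simps)
  thus "1/b^2 - tz a b > 0" using b2 by (simp add: zero_less_mult_iff)
  have r: "rho1 a b = c2*(b^2+d)^2/a^6" unfolding rho1_def c2_def d_def ..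
  have "(d - b^2)^2*(b^2+d)^2 = (a^2*c2)^2" using d2 unfolding c2_def by algebra
  hence "c2^2*(1 - b^2*tz a b)*(b^2+d)^2 = (a^2*c2)^2" using e1 by simp
  hence "c2^2*((1 - b^2*tz a b)*(b^2+d)^2) = c2^2*a^4"
    by (simp only: mult.assoc power_mult_distrib) (simp add: algebra_simps power2_eq_square power4_eq_xxxx)
  hence e2: "(1 - b^2*tz a b)*(b^2+d)^2 = a^4" using c2p by simp
  have "(1/b^2 - tz a b) * rho1 a b = (1 - b^2*tz a b)*(b^2+d)^2 * c2/(a^6*b^2)"
    unfolding r using b2 by (simp add: field_simps)
  also have "\<dots> = c2/(a^2*b^2)" unfolding e2 using a2 b2 by (simp add: eval_nat_numeral field_simps)
  finally show "(1/b^2 - tz a b) * rho1 a b = (a^2-b^2)/(a^2*b^2)" unfolding c2_def .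
qed

definition "fN a b u = u^2/a^2 + (1-u^2)/b^2"
definition "fS a b u = fN a b u - tz a b"
definition "fal a b u = tz a b*(u^2/a^4 + (1-u^2)/b^4) + fS a b u/(a^2*b^2)"
definition "fbb a b u = 4*tz a b*(a^2-b^2)^2/(a^6*b^6) * (u^2*(1-u^2)) * fS a b u"
definition "fD a b u = (fal a b u)^2 - fbb a b u"
definition "fH3 a b u = 4*tz a b*(fN a b u)^4*((fal a b u)^2 + fbb a b u)"
definition "cK a b = 4*sqrt(tz a b)*(a^2-b^2)*sqrt(1/b^2 - tz a b)/(a^3*b^3)"
definition "fH2 a b u = 4*tz a b*(fN a b u)^4*cK a b*fal a b u*u"
definition "fH0 a b u = 2*fH3 a b u - 8*tz a b*(tz a b - fS a b u)*fD a b u*(fN a b u)^3"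

lemma main_u:
  fixes a b u \<sigma> :: real and P2 P3 :: pt
  assumes ab: "a > b" "b > 0" and u: "-1 < u" "u < 1"
    and tp: "three_periodic a b (a*u, b*sqrt(1-u^2)) P2 P3"
    and sg: "\<sigma> = 1 \<or> \<sigma> = -1"
    and orr: "\<sigma> * signed_area2 (a*u, b*sqrt(1-u^2)) P2 P3 > 0"
  shows "(fD a b u)^2 * (seglen (a*u, b*sqrt(1-u^2)) P2)^2
           = fH3 a b u + \<sigma>*fH2 a b u*sqrt(1-u^2)*sqrt(1 - rho1 a b*u^2)"
    and "(fD a b u)^2 * (seglen (a*u, b*sqrt(1-u^2)) P3)^2
           = fH3 a b u - \<sigma>*fH2 a b u*sqrt(1-u^2)*sqrt(1 - rho1 a b*u^2)"
    and "(fD a b u)^2 * (seglen P2 P3)^2 = fH0 a b u"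
proof -
  define u1 where "u1 = sqrt(1-u^2)"
  define u2 where "u2 = sqrt(1 - rho1 a b*u^2)"
  define P1 where "P1 = (a*u, b*u1)"
  define t where "t = tz a b"
  have a0: "a > 0" using ab by simp
  have b0: "b > 0" using ab by simp
  have u2p: "1 - u^2 > 0" using u by (simp add: abs_square_less_1 abs_less_iff)
  have u1s: "u1^2 = 1 - u^2" unfolding u1_def using u2p by simp
  have uu: "u^2 + u1^2 = 1" using u1s by simp
  have tp1: "three_periodic a b P1 P2 P3" using tp unfolding P1_def u1_def .
  obtain k where kp: "k > 0" and k12: "mm a b P1 P2 = k*seglen P1 P2"
     and k13: "mm a b P1 P3 = k*seglen P1 P3" and k23: "mm a b P2 P3 = k*seglen P2 P3"
    using kcommon[OF a0 b0 tp1] by blast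
  have kt: "k^2 = t" using tval[OF ab tp1 kp k12 k13 k23] unfolding t_def .
  have ksq: "k = sqrt t" using kt kp by (metis abs_of_pos real_sqrt_abs)
  have tf: "t > 0" "1/b^2 - t > 0" "(1/b^2 - t) * rho1 a b = (a^2-b^2)/(a^2*b^2)"
    using tz_facts[OF ab] unfolding t_def by auto
  have ar: "signed_area2 P1 P2 P3 \<noteq> 0" and e2: "on_ellipse a b P2" and e3: "on_ellipse a b P3"
    using tp1 unfolding three_periodic_def by auto
  have d: "P1 \<noteq> P2" "P1 \<noteq> P3" "P2 \<noteq> P3" using area_distinct[OF ar] by auto
  obtain x2 y2 where P2: "P2 = (x2,y2)" by fastforce
  obtain x3 y3 where P3: "P3 = (x3,y3)" by fastforce
  define L2 where "L2 = seglen P1 P2"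
  define L3 where "L3 = seglen P1 P3"
  have L2p: "L2 > 0" unfolding L2_def using seglen_pos d by auto
  have L3p: "L3 > 0" unfolding L3_def using seglen_pos d by auto
  have el2: "x2^2/a^2 + y2^2/b^2 = 1" using e2 unfolding on_ellipse_def P2 by simp
  have el3: "x3^2/a^2 + y3^2/b^2 = 1" using e3 unfolding on_ellipse_def P3 by simp
  have sq2: "L2^2 = (x2 - a*u)^2 + (y2 - b*u1)^2" using seglen_sq[of P1 P2] unfolding L2_def P1_def P2 by simp
  have sq3: "L3^2 = (x3 - a*u)^2 + (y3 - b*u1)^2" using seglen_sq[of P1 P3] unfolding L3_def P1_def P3 by simp
  have mk2: "1 - (a*u)*x2/a^2 - (b*u1)*y2/b^2 = k*L2" using k12 unfolding mm_def L2_def P1_def P2 by simp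
  have mk3: "1 - (a*u)*x3/a^2 - (b*u1)*y3/b^2 = k*L3" using k13 unfolding mm_def L3_def P1_def P3 by simp
  note B2 = partB[OF a0 b0 uu el2 L2p sq2 mk2]
  note B3 = partB[OF a0 b0 uu el3 L3p sq3 mk3]
  define nx where "nx = u/a"
  define ny where "ny = u1/b"
  define d2x where "d2x = x2 - a*u"
  define d2y where "d2y = y2 - b*u1"
  define d3x where "d3x = x3 - a*u"
  define d3y where "d3y = y3 - b*u1"
  define w2 where "w2 = -ny*d2x + nx*d2y"
  define w3 where "w3 = -ny*d3x + nx*d3y"
  define om2 where "om2 = w2/L2"
  define om3 where "om3 = w3/L3"
  define N where "N = fN a b u"
  define S where "S = fS a b u"
  define al where "al = fal a b u"
  define be where "be = 2*k*u*u1*(a^2-b^2)/(a^3*b^3)"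
  have NN: "u^2/a^2 + u1^2/b^2 = N" unfolding N_def fN_def u1s ..
  have Nn: "N = nx^2 + ny^2" unfolding NN[symmetric] nx_def ny_def by (simp add: power_divide)
  have Np: "N > 0" unfolding N_def fN_def using u2p b0 by (simp add: add_nonneg_pos)
  have SN: "S = N - t" unfolding S_def fS_def N_def t_def ..
  have alv: "k^2*(u^2/a^4 + u1^2/b^4) + (N - k^2)/(a^2*b^2) = al"
    by (simp add: al_def fal_def fS_def fN_def kt u1s t_def N_def)
  have nd2: "nx*d2x + ny*d2y = -k*L2" using B2(1) unfolding nx_def ny_def d2x_def d2y_def .
  have nd3: "nx*d3x + ny*d3y = -k*L3" using B3(1) unfolding nx_def ny_def d3x_def d3y_def .
  have o2: "om2^2 = S" using B2(2) unfolding om2_def w2_def nx_def ny_def d2x_def d2y_def NN kt SN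
    by simp
  have o3: "om3^2 = S" using B3(2) unfolding om3_def w3_def nx_def ny_def d3x_def d3y_def NN kt SN
    by simp
  have om2e: "((-(u1/b)*(x2-a*u) + (u/a)*(y2-b*u1))/L2) = om2"
    unfolding om2_def w2_def nx_def ny_def d2x_def d2y_def by simp
  have f2: "2*k*N^2 = L2*(al - be*om2)"
    using B2(3) unfolding NN unfolding alv om2e be_def by simp
  have om3e: "((-(u1/b)*(x3-a*u) + (u/a)*(y3-b*u1))/L3) = om3"
    unfolding om3_def w3_def nx_def ny_def d3x_def d3y_def by simp
  have f3: "2*k*N^2 = L3*(al - be*om3)"
    using B3(3) unfolding NN unfolding alv om3e be_def by simp
  have w2L: "w2 = om2*L2" unfolding om2_def using L2p by simp
  have w3L: "w3 = om3*L3" unfolding om3_def using L3p by simp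
  define R where "R = sqrt S"
  have S0: "S \<ge> 0" using o2 by (metis zero_le_power2)
  have om2R: "om2 = R \<or> om2 = -R" unfolding R_def using o2 S0
    by (metis power2_eq_iff real_sqrt_pow2)
  have om3R: "om3 = R \<or> om3 = -R" unfolding R_def using o3 S0
    by (metis power2_eq_iff real_sqrt_pow2)
  have area: "N * signed_area2 P1 P2 P3 = k*L2*L3*(om2 - om3)"
  proof -
    have "signed_area2 P1 P2 P3 = d2x*d3y - d2y*d3x"
      unfolding signed_area2_def P1_def P2 P3 d2x_def d2y_def d3x_def d3y_def by simp
    hence "N*signed_area2 P1 P2 P3 = (nx^2+ny^2)*(d2x*d3y - d2y*d3x)" using Nn by simp
    also have "\<dots> = (nx*d2x+ny*d2y)*w3 - w2*(nx*d3x+ny*d3y)"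
      unfolding w2_def w3_def by algebra
    also have "\<dots> = (-k*L2)*(om3*L3) - (om2*L2)*(-k*L3)" unfolding nd2 nd3 w2L w3L ..
    also have "\<dots> = k*L2*L3*(om2 - om3)" by (simp add: algebra_simps)
    finally show ?thesis .
  qed
  have "\<sigma>*(N * signed_area2 P1 P2 P3) > 0" using orr Np unfolding P1_def u1_def
    by (metis mult.left_commute mult_pos_pos)
  hence "(k*L2*L3)*(\<sigma>*(om2 - om3)) > 0" unfolding area by (simp add: algebra_simps)
  moreover have "k*L2*L3 > 0" using kp L2p L3p by simp
  ultimately have pos: "\<sigma>*(om2 - om3) > 0" using zero_less_mult_pos by blast
  have R0: "R \<ge> 0" unfolding R_def using S0 by simp
  have om: "om2 = \<sigma>*R \<and> om3 = -\<sigma>*R" using sg om2R om3R pos R0 by auto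
  have Sfac: "S = (1/b^2 - t)*(1 - rho1 a b*u^2)"
  proof -
    have "S = (1/b^2 - t) - u^2*((a^2-b^2)/(a^2*b^2))"
      unfolding S_def fS_def fN_def t_def using a0 b0 by (simp add: field_simps)
    thus ?thesis unfolding tf(3)[symmetric] by (simp add: algebra_simps)
  qed
  have Rv: "R = sqrt(1/b^2 - t) * u2" unfolding R_def u2_def Sfac real_sqrt_mult ..
  have "be^2 = 4*k^2*u^2*u1^2*(a^2-b^2)^2/(a^3*b^3)^2" unfolding be_def
    by (simp add: power_mult_distrib power_divide)
  also have "\<dots> = 4*t*(a^2-b^2)^2/(a^6*b^6) * (u^2*(1-u^2))" unfolding kt u1s
    by (simp add: power_mult_distrib flip: power_mult)
  finally have "be^2 = 4*t*(a^2-b^2)^2/(a^6*b^6) * (u^2*(1-u^2))" .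
  hence bbv: "be^2*S = fbb a b u"
    unfolding fbb_def S_def[symmetric] t_def[symmetric] by simp
  have Dv: "fD a b u = al^2 - be^2*S" unfolding fD_def al_def bbv ..
  have H3v: "fH3 a b u = 4*t*N^4*(al^2 + be^2*S)" unfolding fH3_def t_def N_def al_def bbv ..
  have H2v: "fH2 a b u*u1*u2 = 4*t*N^4*(2*al*be*R)"
    unfolding fH2_def cK_def be_def Rv t_def[symmetric] N_def[symmetric] al_def[symmetric] ksq
    by (simp add: algebra_simps)
  have D2: "fD a b u = (al - be*om2)*(al + be*om2)" unfolding Dv o2[symmetric]
    by (simp add: algebra_simps power2_eq_square)
  have D3: "fD a b u = (al - be*om3)*(al + be*om3)" unfolding Dv o3[symmetric]
    by (simp add: algebra_simps power2_eq_square)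
  have G2: "(fD a b u)^2*L2^2 = 4*t*N^4*(al^2 + be^2*S + 2*al*be*om2)"
  proof -
    have "(fD a b u)^2*L2^2 = (L2*(al-be*om2))^2*(al+be*om2)^2" unfolding D2
      by (simp add: power_mult_distrib)
    also have "\<dots> = (2*k*N^2)^2*(al+be*om2)^2" unfolding f2 ..
    also have "\<dots> = 4*t*N^4*(al^2 + be^2*S + 2*al*be*om2)" unfolding kt[symmetric] o2[symmetric]
      by (simp add: power2_eq_square power4_eq_xxxx algebra_simps)
    finally show ?thesis .
  qed
  have G3: "(fD a b u)^2*L3^2 = 4*t*N^4*(al^2 + be^2*S + 2*al*be*om3)"
  proof -
    have "(fD a b u)^2*L3^2 = (L3*(al-be*om3))^2*(al+be*om3)^2" unfolding D3
      by (simp add: power_mult_distrib)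
    also have "\<dots> = (2*k*N^2)^2*(al+be*om3)^2" unfolding f3 ..
    also have "\<dots> = 4*t*N^4*(al^2 + be^2*S + 2*al*be*om3)" unfolding kt[symmetric] o3[symmetric]
      by (simp add: power2_eq_square power4_eq_xxxx algebra_simps)
    finally show ?thesis .
  qed
  have sL2: "seglen (a*u, b*sqrt(1-u^2)) P2 = L2" unfolding L2_def P1_def u1_def ..
  have sL3: "seglen (a*u, b*sqrt(1-u^2)) P3 = L3" unfolding L3_def P1_def u1_def ..
  show "(fD a b u)^2 * (seglen (a*u, b*sqrt(1-u^2)) P2)^2
           = fH3 a b u + \<sigma>*fH2 a b u*sqrt(1-u^2)*sqrt(1 - rho1 a b*u^2)"
  proof -
    have "\<sigma>*fH2 a b u*sqrt(1-u^2)*sqrt(1 - rho1 a b*u^2) = \<sigma>*(fH2 a b u*u1*u2)"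
      unfolding u1_def u2_def by simp
    hence HH: "\<sigma>*fH2 a b u*sqrt(1-u^2)*sqrt(1 - rho1 a b*u^2) = \<sigma>*(4*t*N^4*(2*al*be*R))"
      unfolding H2v .
    show ?thesis unfolding sL2 G2 H3v HH using om by (simp add: algebra_simps)
  qed
  show "(fD a b u)^2 * (seglen (a*u, b*sqrt(1-u^2)) P3)^2
           = fH3 a b u - \<sigma>*fH2 a b u*sqrt(1-u^2)*sqrt(1 - rho1 a b*u^2)"
  proof -
    have "\<sigma>*fH2 a b u*sqrt(1-u^2)*sqrt(1 - rho1 a b*u^2) = \<sigma>*(fH2 a b u*u1*u2)"
      unfolding u1_def u2_def by simp
    hence HH: "\<sigma>*fH2 a b u*sqrt(1-u^2)*sqrt(1 - rho1 a b*u^2) = \<sigma>*(4*t*N^4*(2*al*be*R))"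
      unfolding H2v .
    show ?thesis unfolding sL3 G3 H3v HH using om by (simp add: algebra_simps)
  qed
  define dot where "dot = d2x*d3x + d2y*d3y"
  have Ndot: "N*dot = L2*L3*(t - S)"
  proof -
    have "N*dot = (nx*d2x+ny*d2y)*(nx*d3x+ny*d3y) + w2*w3"
      unfolding Nn dot_def w2_def w3_def by algebra
    also have "\<dots> = (-k*L2)*(-k*L3) + (om2*L2)*(om3*L3)" unfolding nd2 nd3 w2L w3L ..
    also have "\<dots> = L2*L3*(k^2 + om2*om3)" by (simp add: algebra_simps power2_eq_square)
    also have "om2*om3 = -S" using om sg R0 unfolding R_def by auto
    finally show ?thesis unfolding kt by simp
  qed
  have DL: "fD a b u*(L2*L3) = 4*t*N^4"
  proof -
    have "fD a b u*(L2*L3) = (L2*(al - be*om2))*(L3*(al-be*om3))" unfolding D2 using om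
      by (simp add: algebra_simps)
    also have "\<dots> = (2*k*N^2)*(2*k*N^2)" unfolding f2[symmetric] f3[symmetric] ..
    finally show ?thesis using kt by (simp add: algebra_simps power2_eq_square power4_eq_xxxx)
  qed
  have "N*((fD a b u)^2*dot) = (fD a b u)^2*(N*dot)" by (simp add: algebra_simps)
  also have "\<dots> = fD a b u*(fD a b u*(L2*L3))*(t-S)" unfolding Ndot
    by (simp add: algebra_simps power2_eq_square)
  finally have "N*((fD a b u)^2*dot) = fD a b u*(fD a b u*(L2*L3))*(t-S)" .
  hence "N*((fD a b u)^2*dot) = N*(4*t*N^3*(t-S)*fD a b u)" unfolding DL
    by (simp add: algebra_simps power3_eq_cube power4_eq_xxxx)
  hence Ddot: "(fD a b u)^2*dot = 4*t*N^3*(t-S)*fD a b u" using Np by simp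
  have L23: "(seglen P2 P3)^2 = L2^2 + L3^2 - 2*dot"
    unfolding seglen_sq sq2 sq3 dot_def P2 P3 d2x_def d2y_def d3x_def d3y_def
    by (simp add: power2_eq_square algebra_simps)
  show "(fD a b u)^2 * (seglen P2 P3)^2 = fH0 a b u"
  proof -
    have "(fD a b u)^2 * (seglen P2 P3)^2 = (fD a b u)^2*L2^2 + (fD a b u)^2*L3^2 - 2*((fD a b u)^2*dot)"
      unfolding L23 by (simp add: algebra_simps)
    also have "\<dots> = fH0 a b u" unfolding G2 G3 Ddot fH0_def H3v
      using om by (simp add: algebra_simps S_def[symmetric] t_def[symmetric] N_def[symmetric])
    finally show ?thesis .
  qed
qed

theorem lemma6:
  fixes a b :: real and P2 P3 :: "real \<Rightarrow> real \<times> real"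
  assumes "a > b" and "b > 0"
    and periodic: "\<forall>u\<in>{-1<..<1}.
                     three_periodic a b (a * u, b * sqrt (1 - u^2)) (P2 u) (P3 u)"
    and orient: "\<exists>\<sigma>\<in>{-1, 1::real}. \<forall>u\<in>{-1<..<1}.
                     \<sigma> * signed_area2 (a * u, b * sqrt (1 - u^2)) (P2 u) (P3 u) > 0"
  shows "\<exists>h0 h1 h2 h3 :: real poly. \<exists>\<epsilon>\<in>{-1, 1::real}. h1 \<noteq> 0 \<and>
           (\<forall>u\<in>{-1<..<1}.
              let P1 = (a * u, b * sqrt (1 - u^2));
                  u1 = sqrt (1 - u^2);
                  u2 = sqrt (1 - rho1 a b * u^2)
              in poly h1 u * (seglen (P2 u) (P3 u))^2 = poly h0 u
               \<and> poly h1 u * (seglen (P3 u) P1)^2 = poly h3 u - \<epsilon> * poly h2 u * u1 * u2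
               \<and> poly h1 u * (seglen P1 (P2 u))^2 = poly h3 u + \<epsilon> * poly h2 u * u1 * u2)"
proof -
  obtain \<sigma> where sg: "\<sigma> \<in> {-1, 1::real}" and or: "\<forall>u\<in>{-1<..<1}.
                     \<sigma> * signed_area2 (a * u, b * sqrt (1 - u^2)) (P2 u) (P3 u) > 0"
    using orient by blast
  define t where "t = tz a b"
  define X :: "real poly" where "X = [:0,1:]"
  define pN where "pN = smult (1/a^2) (X^2) + smult (1/b^2) (1 - X^2)"
  define pS where "pS = pN - [:t:]"
  define pal where "pal = smult t (smult (1/a^4) (X^2) + smult (1/b^4) (1 - X^2)) + smult (1/(a^2*b^2)) pS"
  define pbb where "pbb = smult (4*t*(a^2-b^2)^2/(a^6*b^6)) (X^2*(1-X^2)) * pS"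
  define pD where "pD = pal^2 - pbb"
  define h1 where "h1 = pD^2"
  define h3 where "h3 = smult (4*t) (pN^4 * (pal^2 + pbb))"
  define h2 where "h2 = smult (4*t*cK a b) (pN^4 * pal * X)"
  define h0 where "h0 = smult 2 h3 - smult (8*t) (([:t:] - pS) * pD * pN^3)"
  have eN: "poly pN u = fN a b u" for u unfolding pN_def X_def fN_def by simp
  have eS: "poly pS u = fS a b u" for u unfolding pS_def fS_def eN[symmetric] t_def by simp
  have eal: "poly pal u = fal a b u" for u
    unfolding pal_def fal_def eS[symmetric] t_def X_def by simp
  have ebb: "poly pbb u = fbb a b u" for u
    unfolding pbb_def fbb_def eS[symmetric] t_def X_def by simp
  have eD: "poly pD u = fD a b u" for u unfolding pD_def fD_def eal[symmetric] ebb[symmetric] by simp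
  have e1: "poly h1 u = (fD a b u)^2" for u unfolding h1_def eD[symmetric] by simp
  have e3: "poly h3 u = fH3 a b u" for u
    unfolding h3_def fH3_def eN[symmetric] eal[symmetric] ebb[symmetric] t_def by simp
  have e2: "poly h2 u = fH2 a b u" for u
    unfolding h2_def fH2_def eN[symmetric] eal[symmetric] t_def X_def by (simp add: algebra_simps)
  have e0: "poly h0 u = fH0 a b u" for u
    unfolding h0_def fH0_def e3[symmetric] eS[symmetric] eD[symmetric] eN[symmetric] t_def by simp
  have h1nz: "h1 \<noteq> 0"
  proof -
    have tf: "t > 0" "1/b^2 - t > 0" using tz_facts[OF assms(1,2)] unfolding t_def by auto
    have "fal a b 0 = t/b^4 + (1/b^2 - t)/(a^2*b^2)"
      unfolding fal_def fS_def fN_def t_def by simp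
    moreover have "t/b^4 > 0" using tf assms by simp
    moreover have "(1/b^2 - t)/(a^2*b^2) > 0" using tf assms by simp
    ultimately have "fal a b 0 > 0" by linarith
    hence "fD a b 0 \<noteq> 0" unfolding fD_def fbb_def by simp
    hence "poly h1 0 \<noteq> 0" unfolding e1 by simp
    thus ?thesis by auto
  qed
  show ?thesis
  proof (intro exI bexI conjI)
    show "h1 \<noteq> 0" by (rule h1nz)
    show "\<sigma> \<in> {-1, 1}" by (rule sg)
    show "\<forall>u\<in>{-1<..<1}.
              let P1 = (a * u, b * sqrt (1 - u^2));
                  u1 = sqrt (1 - u^2);
                  u2 = sqrt (1 - rho1 a b * u^2)
              in poly h1 u * (seglen (P2 u) (P3 u))^2 = poly h0 u
               \<and> poly h1 u * (seglen (P3 u) P1)^2 = poly h3 u - \<sigma> * poly h2 u * u1 * u2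
               \<and> poly h1 u * (seglen P1 (P2 u))^2 = poly h3 u + \<sigma> * poly h2 u * u1 * u2"
    proof
      fix u :: real assume u: "u \<in> {-1<..<1}"
      have uu: "-1 < u" "u < 1" using u by auto
      have s1: "\<sigma> = 1 \<or> \<sigma> = -1" using sg by auto
      note M = main_u[OF assms(1,2) uu periodic[rule_format, OF u] s1 or[rule_format, OF u]]
      show "let P1 = (a * u, b * sqrt (1 - u^2));
                  u1 = sqrt (1 - u^2);
                  u2 = sqrt (1 - rho1 a b * u^2)
              in poly h1 u * (seglen (P2 u) (P3 u))^2 = poly h0 u
               \<and> poly h1 u * (seglen (P3 u) P1)^2 = poly h3 u - \<sigma> * poly h2 u * u1 * u2
               \<and> poly h1 u * (seglen P1 (P2 u))^2 = poly h3 u + \<sigma> * poly h2 u * u1 * u2"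
        unfolding Let_def e0 e1 e2 e3 using M seglen_sym[of "P3 u" "(a * u, b * sqrt (1 - u^2))"]
        by (simp add: mult.assoc)
    qed
  qed
qed

end
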